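(* Under the setting in the context, for every integer $v\ge1$ and every real $a>0$, the number $V$ of false discoveries of the knockoffs procedure with parameter $v$ satisfies $$\Pr\big(V\ge(1+a)v\big)\le\theta(a)^v,\qquad \theta(a)=\frac{(a+2)^{a+2}}{2^{a+2}(a+1)^{a+1}},$$ and $\theta(a)<1$.
   Context: Setting: $p\ge1$; $W_1,\dots,W_p$ are real random variables, almost surely pairwise distinct; $\chi_1,\dots,\chi_p$ take values in $\{-1,0,1\}$; $\mathcal H_0\subseteq\{1,\dots,p\}$ is the set of true nulls, and conditional on $(W_1,\dots,W_p)$ and $(\chi_j)_{j\notin\mathcal H_0}$, the variables $(\chi_j)_{j\in\mathcal H_0}$ are jointly independent and uniform on $\{-1,+1\}$. Knockoffs procedure with parameter $v$: let $\rho$ be the permutation with $W_{\rho(1)}>\cdots>W_{\rho(p)}$; let $j^\star$ be the position of the $v$-th $-1$ in $\chi_{\rho(1)},\dots,\chi_{\rho(p)}$ ($j^\star=p$ if fewer than $v$ entries equal $-1$); reject $\rho(j)$ for all $j\le j^\star$ with $\chi_{\rho(j)}=+1$. $V=\#\{j\in\mathcal H_0: j\text{ rejected}\}$. *)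

theory Defs
  imports "HOL-Probability.Probability"
begin

text \<open>Indices are 1..p. The permutation rho is represented by the list
  knockoff_order p w = [rho(1), ..., rho(p)], sorted by decreasing w.\<close>

definition knockoff_order :: "nat \<Rightarrow> (nat \<Rightarrow> real) \<Rightarrow> nat list" where
  "knockoff_order p w = sort_key (\<lambda>j. - w j) [1..<Suc p]"

text \<open>Position (1-based) of the v-th entry equal to -1 in chi(rho 1),...,chi(rho p);
  p if there are fewer than v such entries.\<close>
definition knockoff_jstar :: "nat \<Rightarrow> nat \<Rightarrow> (nat \<Rightarrow> real) \<Rightarrow> (nat \<Rightarrow> int) \<Rightarrow> nat" where
  "knockoff_jstar p v w c =
     (let cs = map c (knockoff_order p w) in
      if v \<le> length (filter (\<lambda>x. x = -1) cs)
      then (LEAST k. length (filter (\<lambda>x. x = -1) (take k cs)) = v)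
      else p)"

definition knockoff_rejections :: "nat \<Rightarrow> nat \<Rightarrow> (nat \<Rightarrow> real) \<Rightarrow> (nat \<Rightarrow> int) \<Rightarrow> nat set" where
  "knockoff_rejections p v w c =
     {knockoff_order p w ! (j - 1) | j. 1 \<le> j \<and> j \<le> knockoff_jstar p v w c
                                     \<and> c (knockoff_order p w ! (j - 1)) = 1}"

definition knockoff_V :: "nat \<Rightarrow> nat \<Rightarrow> nat set \<Rightarrow> (nat \<Rightarrow> real) \<Rightarrow> (nat \<Rightarrow> int) \<Rightarrow> nat" where
  "knockoff_V p v H0 w c = card (H0 \<inter> knockoff_rejections p v w c)"

definition knockoff_theta :: "real \<Rightarrow> real" where
  "knockoff_theta a = (a + 2) powr (a + 2) / (2 powr (a + 2) * (a + 1) powr (a + 1))"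

end

theory Submission
  imports Defs
begin

fun hh :: "int list \<Rightarrow> nat \<Rightarrow> nat" where
  "hh [] v = 0"
| "hh (x#xs) 0 = 0"
| "hh (x#xs) (Suc v) = (if x = 1 then Suc (hh xs (Suc v)) else if x = -1 then hh xs v else hh xs (Suc v))"

fun gg :: "(nat \<Rightarrow> int) \<Rightarrow> nat list \<Rightarrow> nat \<Rightarrow> nat set" where
  "gg c [] v = {}"
| "gg c (x#xs) 0 = {}"
| "gg c (x#xs) (Suc v) = (if c x = 1 then insert x (gg c xs (Suc v)) else if c x = -1 then gg c xs v else gg c xs (Suc v))"

lemma hh_mono: "v \<le> v' \<Longrightarrow> hh xs v \<le> hh xs v'"
proof (induction xs arbitrary: v v')
  case Nil then show ?case by simp
next
  case (Cons x xs)
  show ?case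
  proof (cases v)
    case 0 then show ?thesis by simp
  next
    case (Suc u)
    then obtain u' where v': "v' = Suc u'" "u \<le> u'" using Cons.prems by (cases v') auto
    show ?thesis using Cons.IH[of u u'] Cons.IH[of "Suc u" "Suc u'"] Suc v' by auto
  qed
qed

lemma gg_mem: "i < length L \<Longrightarrow> c (L!i) = 1 \<Longrightarrow> length (filter (\<lambda>x. x = -1) (take i (map c L))) < v \<Longrightarrow> L!i \<in> gg c L v"
proof (induction L arbitrary: i v)
  case Nil then show ?case by simp
next
  case (Cons x L)
  then obtain u where u: "v = Suc u" by (cases v) auto
  show ?case
  proof (cases i)
    case 0 then show ?thesis using Cons.prems u by simp
  next
    case (Suc i')
    show ?thesis
    proof (cases "c x = 1")
      case True then show ?thesis using Cons.prems Cons.IH[of i' v] u Suc by auto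
    next
      case False
      show ?thesis
      proof (cases "c x = -1")
        case True then show ?thesis using Cons.prems Cons.IH[of i' u] u Suc False by auto
      next
        case F2: False then show ?thesis using Cons.prems Cons.IH[of i' v] u Suc False by auto
      qed
    qed
  qed
qed

lemma gg_card: "finite H \<Longrightarrow> card (H \<inter> gg c L v) \<le> hh (map c (filter (\<lambda>j. j \<in> H) L)) v"
proof (induction L arbitrary: v)
  case Nil then show ?case by simp
next
  case (Cons x L)
  show ?case
  proof (cases v)
    case 0 then show ?thesis by (cases "x \<in> H") auto
  next
    case (Suc u)
    have fin: "finite (H \<inter> gg c L w)" for w using Cons.prems by simp
    have m: "hh (map c (filter (\<lambda>j. j \<in> H) L)) u \<le> hh (map c (filter (\<lambda>j. j \<in> H) L)) (Suc u)"
      by (rule hh_mono) simp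
    show ?thesis
    proof (cases "x \<in> H")
      case True
      then show ?thesis using Cons.IH[of u] Cons.IH[of "Suc u"] Suc fin Cons.prems
        by (auto simp: Int_insert_right card_insert_if)
    next
      case False
      then show ?thesis using Cons.IH[of u] Cons.IH[of "Suc u"] Suc m Cons.prems by (auto simp: Int_insert_right)
    qed
  qed
qed

lemma count_take_mono: "i \<le> j \<Longrightarrow> length (filter P (take i xs)) \<le> length (filter P (take j xs))"
proof -
  assume "i \<le> j"
  then have "take j xs = take i xs @ take (j - i) (drop i xs)"
    by (metis le_add_diff_inverse take_add)
  then show ?thesis by simp
qed

lemma count_take_exists: "v \<le> length (filter P xs) \<Longrightarrow> \<exists>k \<le> length xs. length (filter P (take k xs)) = v"
proof (induction xs arbitrary: v)
  case Nil then show ?case by simp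
next
  case (Cons x xs)
  show ?case
  proof (cases v)
    case 0 then show ?thesis by (intro exI[of _ 0]) simp
  next
    case (Suc u)
    show ?thesis
    proof (cases "P x")
      case True
      then obtain k where "k \<le> length xs" "length (filter P (take k xs)) = u"
        using Cons.IH[of u] Cons.prems Suc by auto
      then show ?thesis using True Suc by (intro exI[of _ "Suc k"]) auto
    next
      case False
      then obtain k where "k \<le> length xs" "length (filter P (take k xs)) = v"
        using Cons.IH[of v] Cons.prems by auto
      then show ?thesis using False by (intro exI[of _ "Suc k"]) auto
    qed
  qed
qed

lemma order_props: "length (knockoff_order p w) = p" "set (knockoff_order p w) = {1..p}"
  "distinct (knockoff_order p w)"
  unfolding knockoff_order_def by (auto simp: distinct_sort)

lemma rej_sub: "knockoff_rejections p v w c \<subseteq> gg c (knockoff_order p w) v"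
proof
  fix y assume "y \<in> knockoff_rejections p v w c"
  then obtain j where j: "y = knockoff_order p w ! (j - 1)" "1 \<le> j" "j \<le> knockoff_jstar p v w c"
    "c (knockoff_order p w ! (j - 1)) = 1" unfolding knockoff_rejections_def by auto
  define L where "L = knockoff_order p w"
  define cs where "cs = map c L"
  define i where "i = j - 1"
  have len: "length L = p" unfolding L_def by (simp add: order_props)
  have "i < length L \<and> length (filter (\<lambda>x. x = -1) (take i cs)) < v"
  proof (cases "v \<le> length (filter (\<lambda>x. x = -1) cs)")
    case True
    define P where "P = (\<lambda>k. length (filter (\<lambda>x. x = (-1::int)) (take k cs)) = v)"
    have js: "knockoff_jstar p v w c = (LEAST k. P k)"
      using True unfolding knockoff_jstar_def P_def cs_def L_def by simp
    obtain k0 where k0: "k0 \<le> length cs" "P k0" using count_take_exists[OF True] unfolding P_def by auto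
    have le: "(LEAST k. P k) \<le> k0" by (rule Least_le) fact
    have PL: "P (LEAST k. P k)" by (rule LeastI) fact
    have il: "i < (LEAST k. P k)" using j js unfolding i_def by simp
    have "\<not> P i" using not_less_Least[OF il] .
    moreover have "length (filter (\<lambda>x. x = -1) (take i cs)) \<le> v"
      using count_take_mono[of i "LEAST k. P k" "\<lambda>x. x = -1" cs] il PL unfolding P_def by simp
    ultimately show ?thesis using il le k0 unfolding P_def cs_def by simp
  next
    case False
    have js: "knockoff_jstar p v w c = p"
      using False unfolding knockoff_jstar_def cs_def L_def by simp
    have "length (filter (\<lambda>x. x = -1) (take i cs)) \<le> length (filter (\<lambda>x. x = -1) cs)"
      using count_take_mono[of i "length cs" "\<lambda>x. x = -1" cs] by (cases "i \<le> length cs") auto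
    then show ?thesis using False js j len unfolding i_def by simp
  qed
  then show "y \<in> gg c (knockoff_order p w) v"
    using gg_mem[of i L c v] j unfolding i_def cs_def L_def by simp
qed

lemma V_le: "finite H0 \<Longrightarrow> knockoff_V p v H0 w c \<le> hh (map c (filter (\<lambda>j. j \<in> H0) (knockoff_order p w))) v"
proof -
  assume f: "finite H0"
  have "knockoff_V p v H0 w c \<le> card (H0 \<inter> gg c (knockoff_order p w) v)"
    unfolding knockoff_V_def using rej_sub[of p v w c] f by (intro card_mono) auto
  also have "\<dots> \<le> hh (map c (filter (\<lambda>j. j \<in> H0) (knockoff_order p w))) v" by (rule gg_card[OF f])
  finally show ?thesis .
qed

lemma sum_PiE_insert:
  assumes "x \<notin> A"
  shows "(\<Sum>s\<in>PiE (insert x A) B. f s) = (\<Sum>y\<in>B x. \<Sum>g\<in>PiE A B. f (g(x:=y)))"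
proof -
  have "(\<Sum>s\<in>PiE (insert x A) B. f s) = (\<Sum>z\<in>B x \<times> PiE A B. f ((\<lambda>(y, g). g(x := y)) z))"
    unfolding PiE_insert_eq by (rule sum.reindex[OF inj_combinator[OF assms], unfolded comp_def])
  also have "\<dots> = (\<Sum>(y,g)\<in>B x \<times> PiE A B. f (g(x:=y)))"
    by (simp add: case_prod_beta)
  also have "\<dots> = (\<Sum>y\<in>B x. \<Sum>g\<in>PiE A B. f (g(x:=y)))"
    by (rule sum.cartesian_product[symmetric])
  finally show ?thesis .
qed

lemma G_bound:
  fixes t c :: real
  assumes "distinct l" "t \<ge> 0" "c \<ge> 1" "t * c + 1 = 2 * c"
  shows "(\<Sum>s\<in>PiE (set l) (\<lambda>_. {-1,1::int}). t ^ hh (map s l) v) \<le> 2 ^ length l * c ^ v"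
  using assms(1)
proof (induction l arbitrary: v)
  case Nil
  then show ?case using assms by simp
next
  case (Cons x l)
  have xl: "x \<notin> set l" "distinct l" using Cons.prems by auto
  show ?case
  proof (cases v)
    case 0
    have "card (PiE (set (x#l)) (\<lambda>_. {-1,1::int})) = 2 ^ length (x#l)"
      using Cons.prems by (simp add: card_PiE distinct_card card_insert_if mult_2 numeral_2_eq_2)
    then show ?thesis using 0 by simp
  next
    case (Suc u)
    have "(\<Sum>s\<in>PiE (set (x#l)) (\<lambda>_. {-1,1::int}). t ^ hh (map s (x#l)) v)
        = (\<Sum>y\<in>{-1,1::int}. \<Sum>g\<in>PiE (set l) (\<lambda>_. {-1,1::int}). t ^ hh (map (g(x:=y)) (x#l)) v)"
      using sum_PiE_insert[OF xl(1), of "\<lambda>s. t ^ hh (map s (x#l)) v" "\<lambda>_. {-1,1::int}"] by simp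
    also have "\<dots> = t * (\<Sum>g\<in>PiE (set l) (\<lambda>_. {-1,1::int}). t ^ hh (map g l) v)
                   + (\<Sum>g\<in>PiE (set l) (\<lambda>_. {-1,1::int}). t ^ hh (map g l) u)"
      using xl(1) Suc by (simp add: sum_distrib_left)
    also have "\<dots> \<le> t * (2 ^ length l * c ^ v) + 2 ^ length l * c ^ u"
      using Cons.IH[OF xl(2), of v] Cons.IH[OF xl(2), of u] assms(2)
      by (intro add_mono mult_left_mono) auto
    also have "\<dots> = 2 ^ length l * c ^ u * (t * c + 1)" using Suc by (simp add: algebra_simps)
    also have "\<dots> = 2 ^ length (x#l) * c ^ v" using Suc assms(4) by simp
    finally show ?thesis .
  qed
qed

lemma bad_count:
  fixes t c r :: real
  assumes "distinct l" "t \<ge> 1" "c \<ge> 1" "t * c + 1 = 2 * c"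
  shows "real (card {s\<in>PiE (set l) (\<lambda>_. {-1,1::int}). r \<le> real (hh (map s l) v)})
     \<le> 2 ^ length l * c ^ v / t powr r"
proof -
  let ?P = "PiE (set l) (\<lambda>_. {-1,1::int})"
  let ?S = "{s\<in>?P. r \<le> real (hh (map s l) v)}"
  have fin: "finite ?P" by (simp add: finite_PiE)
  have tp: "t powr r > 0" using assms by simp
  have "real (card ?S) = (\<Sum>s\<in>?S. 1)" by simp
  also have "\<dots> \<le> (\<Sum>s\<in>?S. t ^ hh (map s l) v / t powr r)"
  proof (rule sum_mono)
    fix s assume "s \<in> ?S"
    then have "t powr r \<le> t powr real (hh (map s l) v)" using assms by (intro powr_mono) auto
    also have "\<dots> = t ^ hh (map s l) v" using assms by (simp add: powr_realpow)
    finally show "1 \<le> t ^ hh (map s l) v / t powr r" using tp by simp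
  qed
  also have "\<dots> \<le> (\<Sum>s\<in>?P. t ^ hh (map s l) v / t powr r)"
    using fin tp assms by (intro sum_mono2) auto
  also have "\<dots> = (\<Sum>s\<in>?P. t ^ hh (map s l) v) / t powr r" by (simp add: sum_divide_distrib)
  also have "\<dots> \<le> 2 ^ length l * c ^ v / t powr r"
    using G_bound[OF assms(1) _ assms(3,4), of v] assms tp by (intro divide_right_mono) auto
  finally show ?thesis .
qed

lemma ln_strict: "0 < (x::real) \<Longrightarrow> x \<noteq> 1 \<Longrightarrow> ln x < x - 1"
proof -
  assume x: "0 < x" "x \<noteq> 1"
  have s: "sqrt x > 0" "sqrt x \<noteq> 1" using x by auto
  have "ln x = 2 * ln (sqrt x)" using x by (simp add: ln_sqrt)
  also have "\<dots> \<le> 2 * (sqrt x - 1)" using ln_le_minus_one[OF s(1)] by simp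
  also have "\<dots> < x - 1"
  proof -
    have "(sqrt x - 1)^2 > 0" using s by simp
    then show ?thesis using x by (simp add: power2_eq_square algebra_simps)
  qed
  finally show ?thesis .
qed

lemma theta_lt1: "a > 0 \<Longrightarrow> knockoff_theta a < 1"
proof -
  assume a: "a > 0"
  have th: "knockoff_theta a > 0" unfolding knockoff_theta_def using a by simp
  have "ln (knockoff_theta a) = (a+2) * ln (a+2) - ((a+2) * ln 2 + (a+1) * ln (a+1))"
    unfolding knockoff_theta_def using a by (simp add: ln_div ln_mult ln_powr)
  also have "\<dots> = - ((a+1) * ln (2*(a+1)/(a+2)) + ln (2/(a+2)))"
  proof -
    have e: "ln (2*(a+1)) = ln 2 + ln (a+1)" using ln_mult[of 2 "a+1"] a by simp
    have "ln (2*(a+1)/(a+2)) = ln (2*(a+1)) - ln (a+2)" using ln_div[of "2*(a+1)" "a+2"] a by simp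
    then have q1: "ln (2*(a+1)/(a+2)) = ln 2 + ln (a+1) - ln (a+2)" using e by simp
    have q2: "ln (2/(a+2)) = ln 2 - ln (a+2)" using a by (simp add: ln_div)
    show ?thesis by (simp only: q1 q2) (simp add: algebra_simps)
  qed
  also have "\<dots> < 0"
  proof -
    have y: "2*(a+1)/(a+2) > 0" "2*(a+1)/(a+2) \<noteq> 1" using a by (auto simp: field_simps)
    have "ln ((a+2)/(2*(a+1))) < (a+2)/(2*(a+1)) - 1"
    proof (rule ln_strict)
      show "0 < (a+2)/(2*(a+1))" using a by simp
      show "(a+2)/(2*(a+1)) \<noteq> 1" using a by (simp add: field_simps)
    qed
    then have "ln (2*(a+1)/(a+2)) > 1 - (a+2)/(2*(a+1))"
      using a by (simp add: ln_div)
    then have "(a+1) * ln (2*(a+1)/(a+2)) > (a+1) * (1 - (a+2)/(2*(a+1)))"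
      using a by (intro mult_strict_left_mono) auto
    also have "(a+1) * (1 - (a+2)/(2*(a+1))) = a/2" using a by (simp add: field_simps)
    finally have 1: "(a+1) * ln (2*(a+1)/(a+2)) > a/2" .
    have "ln ((a+2)/2) \<le> (a+2)/2 - 1" using a by (intro ln_le_minus_one) auto
    then have 2: "ln (2/(a+2)) \<ge> - a/2" using a by (simp add: ln_div field_simps)
    show ?thesis using 1 2 by simp
  qed
  finally show ?thesis using th by simp
qed

lemma theta_eq:
  assumes a: "a > 0"
  shows "((2+a)/2) / (2*(1+a)/(2+a)) powr (1+a) = knockoff_theta a"
proof -
  have e1: "(2*(1+a)/(2+a)) powr (1+a) = 2 powr (a+1) * (a+1) powr (a+1) / (a+2) powr (a+1)"
    using a by (simp add: powr_divide powr_mult[symmetric] add.commute)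
  have e2: "(a+2) powr (a+2) = (a+2) * (a+2) powr (a+1)"
  proof -
    have "(a+2) powr (a+2) = (a+2) powr (1 + (a+1))" by (simp add: add.commute)
    also have "\<dots> = (a+2) powr 1 * (a+2) powr (a+1)" by (rule powr_add)
    finally show ?thesis using a by simp
  qed
  have e3: "(2::real) powr (a+2) = 2 * 2 powr (a+1)"
  proof -
    have "(2::real) powr (a+2) = 2 powr (1 + (a+1))" by (simp add: add.commute)
    also have "\<dots> = 2 powr 1 * 2 powr (a+1)" by (rule powr_add)
    finally show ?thesis by simp
  qed
  have "((2+a)/2) / (2*(1+a)/(2+a)) powr (1+a) = ((a+2)/2) / (2 powr (a+1) * (a+1) powr (a+1) / (a+2) powr (a+1))"
    unfolding e1 by (simp add: add.commute)
  also have "\<dots> = (a+2) * (a+2) powr (a+1) / (2 * 2 powr (a+1) * (a+1) powr (a+1))"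
    using a by (simp add: field_simps)
  also have "\<dots> = knockoff_theta a" unfolding knockoff_theta_def e2 e3 by simp
  finally show ?thesis .
qed

lemma insort_meas:
  fixes f :: "'a \<Rightarrow> nat \<Rightarrow> real"
  assumes f: "\<And>j. j \<in> S \<Longrightarrow> (\<lambda>\<omega>. f \<omega> j) \<in> borel_measurable N"
    and "x \<in> S" "set ys \<subseteq> S"
  shows "(\<lambda>\<omega>. insort_key (f \<omega>) x ys) \<in> measurable N (count_space UNIV)"
  using assms(3)
proof (induction ys)
  case Nil then show ?case by simp
next
  case (Cons y ys)
  have y: "y \<in> S" using Cons.prems by simp
  have IH: "(\<lambda>\<omega>. insort_key (f \<omega>) x ys) \<in> measurable N (count_space UNIV)" using Cons by simp
  have c: "(\<lambda>\<omega>. y # insort_key (f \<omega>) x ys) \<in> measurable N (count_space UNIV)"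
    by (rule measurable_compose[OF IH, of "\<lambda>l. y # l"]) simp
  have p: "{\<omega> \<in> space N. f \<omega> x \<le> f \<omega> y} \<in> sets N"
    by (rule borel_measurable_le[OF f[OF \<open>x \<in> S\<close>] f[OF y]])
  have eq: "(\<lambda>\<omega>. insort_key (f \<omega>) x (y#ys)) = (\<lambda>\<omega>. if f \<omega> x \<le> f \<omega> y then x#y#ys else y # insort_key (f \<omega>) x ys)"
    by simp
  have k: "(\<lambda>\<omega>. x#y#ys) \<in> measurable N (count_space UNIV)" by (rule measurable_const) simp
  show ?case unfolding eq by (rule measurable_If[OF k c p])
qed

lemma sort_meas:
  fixes f :: "'a \<Rightarrow> nat \<Rightarrow> real"
  assumes f: "\<And>j. j \<in> S \<Longrightarrow> (\<lambda>\<omega>. f \<omega> j) \<in> borel_measurable N"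
    and "set xs \<subseteq> S"
  shows "(\<lambda>\<omega>. sort_key (f \<omega>) xs) \<in> measurable N (count_space {ys::nat list. set ys \<subseteq> S})"
  using assms(2)
proof (induction xs)
  case Nil then show ?case by simp
next
  case (Cons x xs)
  have x: "x \<in> S" and xs: "set xs \<subseteq> S" using Cons.prems by auto
  have "(\<lambda>\<omega>. insort_key (f \<omega>) x (sort_key (f \<omega>) xs)) \<in> measurable N (count_space UNIV)"
  proof (rule measurable_compose_countable'[where f="\<lambda>i \<omega>. insort_key (f \<omega>) x i"])
    show "(\<lambda>\<omega>. sort_key (f \<omega>) xs) \<in> measurable N (count_space {ys::nat list. set ys \<subseteq> S})"
      using Cons.IH xs .
    show "countable {ys::nat list. set ys \<subseteq> S}" by (rule countable_subset[OF subset_UNIV]) simp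
    fix i :: "nat list" assume "i \<in> {ys. set ys \<subseteq> S}"
    then show "(\<lambda>\<omega>. insort_key (f \<omega>) x i) \<in> measurable N (count_space UNIV)"
      using insort_meas[OF f x] by auto
  qed
  moreover have "(\<lambda>\<omega>. insort_key (f \<omega>) x (sort_key (f \<omega>) xs)) \<in> space N \<rightarrow> {ys. set ys \<subseteq> S}"
    using x xs by (auto simp: set_insort_key)
  ultimately have "(\<lambda>\<omega>. insort_key (f \<omega>) x (sort_key (f \<omega>) xs)) \<in> measurable N (count_space {ys::nat list. set ys \<subseteq> S})"
    using measurable_count_space_extend[OF subset_UNIV] by blast
  then show ?case by simp
qed

theorem corollary1:
  fixes M :: "'a measure" and p v :: nat and a :: real
    and W :: "nat \<Rightarrow> 'a \<Rightarrow> real" and chi :: "nat \<Rightarrow> 'a \<Rightarrow> int" and H0 :: "nat set"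
  assumes "prob_space M"
    and "p \<ge> 1"
    and "H0 \<subseteq> {1..p}"
    and W_meas: "\<And>j. j \<in> {1..p} \<Longrightarrow> W j \<in> borel_measurable M"
    and chi_meas: "\<And>j. j \<in> {1..p} \<Longrightarrow> chi j \<in> measurable M (count_space UNIV)"
    and chi_vals: "\<And>j \<omega>. j \<in> {1..p} \<Longrightarrow> \<omega> \<in> space M \<Longrightarrow> chi j \<omega> \<in> {-1, 0, 1}"
    and distinct: "AE \<omega> in M. \<forall>i\<in>{1..p}. \<forall>j\<in>{1..p}. i \<noteq> j \<longrightarrow> W i \<omega> \<noteq> W j \<omega>"
    and nulls: "\<And>B s. B \<in> sigma_sets (space M)
                   ((\<Union>j\<in>{1..p}. {W j -` A \<inter> space M | A. A \<in> sets borel})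
                    \<union> (\<Union>j\<in>{1..p} - H0. {chi j -` A \<inter> space M | A. True}))
              \<Longrightarrow> (\<forall>j\<in>H0. s j \<in> {-1, 1})
              \<Longrightarrow> measure M (B \<inter> {\<omega> \<in> space M. \<forall>j\<in>H0. chi j \<omega> = s j})
                    = measure M B / 2 ^ card H0"
    and "v \<ge> 1"
    and "a > 0"
  shows "measure M {\<omega> \<in> space M.
            real (knockoff_V p v H0 (\<lambda>j. W j \<omega>) (\<lambda>j. chi j \<omega>)) \<ge> (1 + a) * real v}
           \<le> knockoff_theta a ^ v
         \<and> knockoff_theta a < 1"
proof (rule conjI[rotated])
  show "knockoff_theta a < 1" using theta_lt1 \<open>a > 0\<close> .
next
  interpret P: prob_space M by fact
  define G where "G = ((\<Union>j\<in>{1..p}. {W j -` A \<inter> space M | A. A \<in> sets borel})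
                    \<union> (\<Union>j\<in>{1..p} - H0. {chi j -` A \<inter> space M | A. True}))"
  define N where "N = sigma (space M) G"
  have GP: "G \<subseteq> Pow (space M)" unfolding G_def by auto
  have sN: "sets N = sigma_sets (space M) G" unfolding N_def using GP by (rule sets_measure_of)
  have spN: "space N = space M" unfolding N_def using GP by (rule space_measure_of)
  have WN: "(\<lambda>\<omega>. - W j \<omega>) \<in> borel_measurable N" if j: "j \<in> {1..p}" for j
  proof -
    have "W j \<in> borel_measurable N"
    proof (rule measurableI)
      fix A :: "real set" assume "A \<in> sets borel"
      then have "W j -` A \<inter> space M \<in> G" unfolding G_def using j by blast
      then show "W j -` A \<inter> space N \<in> sets N" unfolding sN spN by (rule sigma_sets.Basic)
    qed simp
    then show ?thesis by (rule borel_measurable_uminus)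
  qed
  define Ord where "Ord = (\<lambda>\<omega>. knockoff_order p (\<lambda>j. W j \<omega>))"
  have Omeas: "Ord \<in> measurable N (count_space {ys::nat list. set ys \<subseteq> {1..p}})"
    unfolding Ord_def knockoff_order_def
    by (rule sort_meas[where f="\<lambda>\<omega> j. - W j \<omega>", OF WN]) auto
  define D where "D = (\<lambda>L. {\<omega> \<in> space M. Ord \<omega> = L})"
  have DS: "D L \<in> sigma_sets (space M) G" for L
  proof (cases "set L \<subseteq> {1..p}")
    case True
    have "{L} \<in> sets (count_space {ys::nat list. set ys \<subseteq> {1..p}})" using True by simp
    then have "Ord -` {L} \<inter> space N \<in> sets N" by (rule measurable_sets[OF Omeas])
    moreover have "D L = Ord -` {L} \<inter> space N" unfolding D_def spN by blast
    ultimately show ?thesis unfolding sN by simp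
  next
    case False
    have "D L = {}"
    proof (rule equals0I)
      fix \<omega> assume "\<omega> \<in> D L"
      then have "\<omega> \<in> space N" "Ord \<omega> = L" unfolding D_def spN by auto
      then have "Ord \<omega> \<in> {ys. set ys \<subseteq> {1..p}}" using measurable_space[OF Omeas] by force
      then show False using False \<open>Ord \<omega> = L\<close> by simp
    qed
    then show ?thesis by (simp add: sigma_sets.Empty)
  qed
  have finH: "finite H0" using assms(3) finite_subset by blast
  define k where "k = card H0"
  define Sset where "Sset = PiE H0 (\<lambda>_. {-1,1::int})"
  define C where "C = (\<lambda>s. {\<omega> \<in> space M. \<forall>j\<in>H0. chi j \<omega> = s j})"
  have Cm: "C s \<in> sets M" for s
    unfolding C_def
  proof (rule sets.sets_Collect_finite_All[OF _ finH])
    fix j assume "j \<in> H0" then have j: "j\<in>{1..p}" using assms(3) by auto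
    have "chi j -` {s j} \<inter> space M \<in> sets M" by (rule measurable_sets[OF chi_meas[OF j]]) simp
    moreover have "{\<omega>\<in>space M. chi j \<omega> = s j} = chi j -` {s j} \<inter> space M" by auto
    ultimately show "{\<omega>\<in>space M. chi j \<omega> = s j} \<in> sets M" by simp
  qed
  have GM: "G \<subseteq> sets M"
  proof
    fix X assume "X \<in> G"
    then consider (w) j A where "j \<in> {1..p}" "A \<in> sets borel" "X = W j -` A \<inter> space M"
      | (c) j A where "j \<in> {1..p}" "X = chi j -` A \<inter> space M" unfolding G_def by blast
    then show "X \<in> sets M"
    proof cases
      case w then show ?thesis using measurable_sets[OF W_meas] by blast
    next
      case c then show ?thesis using measurable_sets[OF chi_meas, of j A] by simp
    qed
  qed
  have Dm: "D L \<in> sets M" for L using DS[of L] sets.sigma_sets_subset[OF GM] by blast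
  have CD: "measure M (B \<inter> C s) = measure M B / 2^k" if "B \<in> sigma_sets (space M) G" "s \<in> Sset" for B s
    using nulls[of B s] that unfolding G_def C_def k_def Sset_def by (auto simp: PiE_iff)
  have cardS: "card Sset = 2^k" by (simp add: Sset_def card_PiE finH k_def numeral_2_eq_2)
  have finS: "finite Sset" by (simp add: Sset_def finite_PiE finH)
  have disjC: "disjoint_family_on C Sset"
    unfolding disjoint_family_on_def
  proof (intro ballI impI)
    fix s s' assume ss: "s \<in> Sset" "s' \<in> Sset" "s \<noteq> s'"
    show "C s \<inter> C s' = {}"
    proof (rule ccontr)
      assume "C s \<inter> C s' \<noteq> {}"
      then obtain \<omega> where "\<omega> \<in> C s" "\<omega> \<in> C s'" by blast
      then have "\<And>j. j \<in> H0 \<Longrightarrow> s j = s' j" unfolding C_def by auto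
      then have "s = s'" using ss unfolding Sset_def by (intro PiE_ext) auto
      then show False using ss by simp
    qed
  qed
  have "measure M (\<Union>s\<in>Sset. C s) = (\<Sum>s\<in>Sset. measure M (C s))"
    by (rule measure_finite_Union[OF finS _ disjC]) (use Cm in auto)
  also have "\<dots> = (\<Sum>s\<in>Sset. 1 / 2^k)"
  proof (rule sum.cong[OF refl])
    fix s assume "s \<in> Sset"
    then have "measure M (space M \<inter> C s) = measure M (space M) / 2^k" by (intro CD sigma_sets_top)
    moreover have "space M \<inter> C s = C s" unfolding C_def by auto
    ultimately show "measure M (C s) = 1 / 2^k" by (simp add: P.prob_space)
  qed
  also have "\<dots> = 1" using cardS by simp
  finally have UC: "measure M (\<Union>s\<in>Sset. C s) = 1" .
  have UCm: "(\<Union>s\<in>Sset. C s) \<in> sets M" using finS Cm by auto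
  have Nm: "measure M (space M - (\<Union>s\<in>Sset. C s)) = 0" using P.prob_compl[OF UCm] UC by simp
  define Lset where "Lset = {L. distinct L \<and> set L = {1..p}}"
  have finL: "finite Lset"
  proof (rule finite_subset[OF _ finite_lists_length_eq[of "{1..p}" p]])
    show "Lset \<subseteq> {xs. set xs \<subseteq> {1..p} \<and> length xs = p}"
      unfolding Lset_def using distinct_card by fastforce
  qed simp
  define r where "r = (1+a) * real v"
  define fl where "fl = (\<lambda>L. filter (\<lambda>j. j\<in>H0) L)"
  define bad where "bad = (\<lambda>L. {s\<in>PiE (set (fl L)) (\<lambda>_. {-1,1::int}). r \<le> real (hh (map s (fl L)) v)})"
  define E where "E = {\<omega> \<in> space M. (1 + a) * real v \<le> real (knockoff_V p v H0 (\<lambda>j. W j \<omega>) (\<lambda>j. chi j \<omega>))}"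
  have flset: "set (fl L) = H0" "distinct (fl L)" if "L \<in> Lset" for L
    using that assms(3) unfolding fl_def Lset_def by auto
  have sub: "E \<subseteq> (space M - (\<Union>s\<in>Sset. C s)) \<union> (\<Union>L\<in>Lset. \<Union>s\<in>bad L. D L \<inter> C s)"
  proof
    fix \<omega> assume \<omega>: "\<omega> \<in> E"
    show "\<omega> \<in> (space M - (\<Union>s\<in>Sset. C s)) \<union> (\<Union>L\<in>Lset. \<Union>s\<in>bad L. D L \<inter> C s)"
    proof (cases "\<omega> \<in> (\<Union>s\<in>Sset. C s)")
      case False then show ?thesis using \<omega> unfolding E_def by auto
    next
      case True
      then obtain s where s: "s \<in> Sset" "\<omega> \<in> C s" by blast
      define L where "L = Ord \<omega>"
      have L: "L \<in> Lset" unfolding L_def Ord_def Lset_def using order_props by auto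
      have om: "\<omega> \<in> space M" using \<omega> unfolding E_def by auto
      have "r \<le> real (knockoff_V p v H0 (\<lambda>j. W j \<omega>) (\<lambda>j. chi j \<omega>))" using \<omega> unfolding E_def r_def by auto
      also have "\<dots> \<le> real (hh (map (\<lambda>j. chi j \<omega>) (fl L)) v)"
        using V_le[OF finH] unfolding fl_def L_def Ord_def by auto
      also have "map (\<lambda>j. chi j \<omega>) (fl L) = map s (fl L)"
        using s(2) flset[OF L] unfolding C_def by (intro map_cong) auto
      finally have "s \<in> bad L" unfolding bad_def using s(1) flset[OF L] unfolding Sset_def by auto
      moreover have "\<omega> \<in> D L" unfolding D_def L_def using om by simp
      ultimately show ?thesis using L s by blast
    qed
  qed
  have badm: "(\<Union>s\<in>bad L. D L \<inter> C s) \<in> sets M" for L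
  proof -
    have "finite (bad L)" unfolding bad_def by (simp add: finite_PiE)
    then show ?thesis using Dm Cm by auto
  qed
  define t where "t = 2*(1+a)/(2+a)"
  define c where "c = (2+a)/2"
  have t1: "t \<ge> 1" unfolding t_def using \<open>a > 0\<close> by (simp add: field_simps)
  have c1: "c \<ge> 1" unfolding c_def using \<open>a > 0\<close> by simp
  have tc: "t * c + 1 = 2 * c" unfolding t_def c_def using \<open>a > 0\<close> by (simp add: field_simps)
  have tr: "t powr r = (t powr (1+a)) ^ v"
  proof -
    have "t powr r = (t powr (1+a)) powr (real v)" unfolding r_def by (simp add: powr_powr)
    also have "\<dots> = (t powr (1+a)) ^ v" using t1 by (intro powr_realpow) simp
    finally show ?thesis .
  qed
  have ct: "c / t powr (1+a) = knockoff_theta a" unfolding c_def t_def by (rule theta_eq) fact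
  have cardbad: "real (card (bad L)) \<le> 2^k * knockoff_theta a ^ v" if L: "L \<in> Lset" for L
  proof -
    have "real (card (bad L)) \<le> 2 ^ length (fl L) * c ^ v / t powr r"
      unfolding bad_def by (rule bad_count[OF flset(2)[OF L] t1 c1 tc])
    also have "length (fl L) = k" unfolding k_def using distinct_card[OF flset(2)[OF L]] flset(1)[OF L] by simp
    also have "2 ^ k * c ^ v / t powr r = 2^k * (c / t powr (1+a)) ^ v" unfolding tr by (simp add: power_divide)
    finally show ?thesis unfolding ct .
  qed
  have "measure M E \<le> measure M ((space M - (\<Union>s\<in>Sset. C s)) \<union> (\<Union>L\<in>Lset. \<Union>s\<in>bad L. D L \<inter> C s))"
    by (rule P.finite_measure_mono[OF sub]) (use UCm badm finL in auto)
  also have "\<dots> \<le> measure M (space M - (\<Union>s\<in>Sset. C s)) + measure M (\<Union>L\<in>Lset. \<Union>s\<in>bad L. D L \<inter> C s)"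
    by (rule measure_Un_le) (use UCm badm finL in auto)
  also have "\<dots> \<le> 0 + (\<Sum>L\<in>Lset. measure M (\<Union>s\<in>bad L. D L \<inter> C s))"
    unfolding Nm by (intro add_mono order_refl P.finite_measure_subadditive_finite finL) (use badm in auto)
  also have "\<dots> \<le> (\<Sum>L\<in>Lset. \<Sum>s\<in>bad L. measure M (D L \<inter> C s))"
  proof -
    have "measure M (\<Union>s\<in>bad L. D L \<inter> C s) \<le> (\<Sum>s\<in>bad L. measure M (D L \<inter> C s))" for L
    proof -
      have "finite (bad L)" unfolding bad_def by (simp add: finite_PiE)
      then show ?thesis
        by (rule P.finite_measure_subadditive_finite) (use Dm Cm in auto)
    qed
    then show ?thesis by (simp add: sum_mono)
  qed
  also have "\<dots> = (\<Sum>L\<in>Lset. real (card (bad L)) * (measure M (D L) / 2^k))"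
  proof (rule sum.cong[OF refl])
    fix L assume L: "L \<in> Lset"
    have "bad L \<subseteq> Sset" unfolding bad_def Sset_def using flset(1)[OF L] by auto
    then have "(\<Sum>s\<in>bad L. measure M (D L \<inter> C s)) = (\<Sum>s\<in>bad L. measure M (D L) / 2^k)"
      using CD[OF DS] by (intro sum.cong) auto
    then show "(\<Sum>s\<in>bad L. measure M (D L \<inter> C s)) = real (card (bad L)) * (measure M (D L) / 2^k)" by simp
  qed
  also have "\<dots> \<le> (\<Sum>L\<in>Lset. knockoff_theta a ^ v * measure M (D L))"
  proof (rule sum_mono)
    fix L assume L: "L \<in> Lset"
    have "real (card (bad L)) * (measure M (D L) / 2^k) \<le> (2^k * knockoff_theta a ^ v) * (measure M (D L) / 2^k)"
      by (rule mult_right_mono[OF cardbad[OF L]]) simp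
    then show "real (card (bad L)) * (measure M (D L) / 2^k) \<le> knockoff_theta a ^ v * measure M (D L)" by simp
  qed
  also have "\<dots> = knockoff_theta a ^ v * measure M (\<Union>L\<in>Lset. D L)"
  proof -
    have "disjoint_family_on D Lset" unfolding disjoint_family_on_def D_def by auto
    then have "measure M (\<Union>L\<in>Lset. D L) = (\<Sum>L\<in>Lset. measure M (D L))"
      by (intro measure_finite_Union finL) (use Dm in auto)
    then show ?thesis by (simp add: sum_distrib_left)
  qed
  also have "\<dots> \<le> knockoff_theta a ^ v * 1"
  proof (rule mult_left_mono)
    show "measure M (\<Union>L\<in>Lset. D L) \<le> 1" by (rule P.prob_le_1)
    show "0 \<le> knockoff_theta a ^ v" unfolding knockoff_theta_def using \<open>a>0\<close> by simp
  qed
  finally have "measure M E \<le> knockoff_theta a ^ v" by simp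
  then show "measure M {\<omega> \<in> space M.
            real (knockoff_V p v H0 (\<lambda>j. W j \<omega>) (\<lambda>j. chi j \<omega>)) \<ge> (1 + a) * real v}
           \<le> knockoff_theta a ^ v" unfolding E_def .
qed

end
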